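(* Let $G$ be a finite group, let $N$ be a non-trivial normal subgroup of $G$ which is a $p$-group for a prime $p$, and let $x,y\in G$. If $C_N(x)=1$, then there exists $n\in N$ such that $p$ divides the order of $\langle x,yn\rangle$. *)

theory Defs
  imports "HOL-Algebra.Algebra"
begin

definition centralizer_in :: "('a, 'b) monoid_scheme \<Rightarrow> 'a set \<Rightarrow> 'a \<Rightarrow> 'a set" where
  "centralizer_in G N x = {n \<in> N. n \<otimes>\<^bsub>G\<^esub> x = x \<otimes>\<^bsub>G\<^esub> n}"

end

theory Submission
  imports Defs
begin

lemma (in group) pgroup_inter_trivial:
  fixes p :: nat
  assumes fin: "finite (carrier G)" and N: "subgroup N G" and cN: "card N = p ^ k"
    and p: "Factorial_Ring.prime p" and H: "subgroup H G" and nd: "\<not> p dvd card H"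
  shows "H \<inter> N = {\<one>}"
proof -
  have I: "subgroup (H \<inter> N) G" using subgroups_Inter_pair[OF H N] .
  have finN: "finite N" using fin N subgroup.subset finite_subset by blast
  have finH: "finite H" using fin H subgroup.subset finite_subset by blast
  have "card (H \<inter> N) dvd card N"
  proof -
    have "subgroup (H \<inter> N) (G\<lparr>carrier := N\<rparr>)" using subgroup_incl[OF I N] by auto
    then have "card (rcosets\<^bsub>G\<lparr>carrier := N\<rparr>\<^esub> (H \<inter> N)) * card (H \<inter> N) = order (G\<lparr>carrier := N\<rparr>)"
      using group.lagrange[OF subgroup_imp_group[OF N]] by blast
    then show ?thesis by (simp add: order_def) (metis dvd_triv_right)
  qed
  then obtain i where "card (H \<inter> N) = p ^ i" using divides_primepow_nat[OF p] cN by auto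
  moreover have "card (H \<inter> N) dvd card H"
  proof -
    have "subgroup (H \<inter> N) (G\<lparr>carrier := H\<rparr>)" using subgroup_incl[OF I H] by auto
    then have "card (rcosets\<^bsub>G\<lparr>carrier := H\<rparr>\<^esub> (H \<inter> N)) * card (H \<inter> N) = order (G\<lparr>carrier := H\<rparr>)"
      using group.lagrange[OF subgroup_imp_group[OF H]] by blast
    then show ?thesis by (simp add: order_def) (metis dvd_triv_right)
  qed
  ultimately have "i = 0" using nd by (metis dvd_power dvd_trans neq0_conv)
  then have c1: "card (H \<inter> N) = 1" using \<open>card (H \<inter> N) = p ^ i\<close> by simp
  have "\<one> \<in> H \<inter> N" using I subgroup.one_closed by blast
  then show ?thesis using c1 by (metis card_1_singletonE singletonD)
qed

lemma (in group) center_nontrivial: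
  fixes p :: nat
  assumes fin: "finite (carrier G)" and N: "subgroup N G" and cN: "card N = p ^ k"
    and p: "Factorial_Ring.prime p" and ne: "N \<noteq> {\<one>}"
  shows "\<exists>z\<in>N. z \<noteq> \<one> \<and> (\<forall>n\<in>N. z \<otimes> n = n \<otimes> z)"
proof -
  define K where "K = G\<lparr>carrier := N\<rparr>"
  have gK: "group K" using subgroup_imp_group N K_def by blast
  define \<phi> where "\<phi> = (\<lambda>g. \<lambda>h\<in>carrier K. g \<otimes>\<^bsub>K\<^esub> h \<otimes>\<^bsub>K\<^esub> inv\<^bsub>K\<^esub> g)"
  have act: "group_action K (carrier K) \<phi>" unfolding \<phi>_def by (rule group.action_by_conjugation[OF gK])
  have cK: "carrier K = N" by (simp add: K_def)
  have NG: "\<And>g. g \<in> N \<Longrightarrow> g \<in> carrier G" using subgroup.mem_carrier[OF N] .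
  have \<phi>_app: "\<And>g h. g \<in> N \<Longrightarrow> h \<in> N \<Longrightarrow> \<phi> g h = g \<otimes> h \<otimes> inv g"
    by (simp add: K_def \<phi>_def N)
  have orb: "orbit K \<phi> z = {g \<otimes> z \<otimes> inv g | g. g \<in> N}" if z: "z \<in> N" for z
    unfolding orbit_def cK using z \<phi>_app by (auto; metis)
  have finN: "finite N" using fin N subgroup.subset finite_subset by blast
  have os: "card (orbit K \<phi> z) dvd p ^ k" if z: "z \<in> N" for z
  proof -
    have "card (orbit K \<phi> z) * card (stabilizer K \<phi> z) = order K"
      using group_action.orbit_stabilizer_theorem[OF act] z cK by blast
    then show ?thesis using cN cK unfolding order_def by (metis dvd_triv_left)
  qed
  have zin: "z \<in> orbit K \<phi> z" if z: "z \<in> N" for z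
  proof -
    have "\<one> \<otimes> z \<otimes> inv \<one> = z" using NG z by simp
    then show ?thesis using orb[OF z] subgroup.one_closed[OF N] by force
  qed
  have central_iff: "card (orbit K \<phi> z) = 1 \<longleftrightarrow> (\<forall>n\<in>N. z \<otimes> n = n \<otimes> z)" if z: "z \<in> N" for z
  proof
    assume c1: "card (orbit K \<phi> z) = 1"
    show "\<forall>n\<in>N. z \<otimes> n = n \<otimes> z"
    proof
      fix n assume n: "n \<in> N"
      have "n \<otimes> z \<otimes> inv n \<in> orbit K \<phi> z" using orb[OF z] n by blast
      then have e: "n \<otimes> z \<otimes> inv n = z" using c1 zin[OF z] by (metis card_1_singletonE singletonD)
      have "n \<otimes> z = n \<otimes> z \<otimes> inv n \<otimes> n" using NG n z by (simp add: m_assoc)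
      then show "z \<otimes> n = n \<otimes> z" using e by simp
    qed
  next
    assume c: "\<forall>n\<in>N. z \<otimes> n = n \<otimes> z"
    have "orbit K \<phi> z = {z}"
    proof -
      have "\<And>g. g \<in> N \<Longrightarrow> g \<otimes> z \<otimes> inv g = z"
        using c NG z by (metis inv_closed m_assoc r_inv r_one)
      then show ?thesis using orb[OF z] zin[OF z] by auto
    qed
    then show "card (orbit K \<phi> z) = 1" by simp
  qed
  have one_in: "\<one> \<in> N" using subgroup.one_closed[OF N] .
  have k1: "k \<ge> 1"
  proof (rule ccontr)
    assume "\<not> k \<ge> 1"
    then have "card N = 1" using cN by simp
    then show False using ne one_in by (metis card_1_singletonE singletonD)
  qed
  define Os where "Os = orbits K (carrier K) \<phi>"
  have Osdef: "Os = {orbit K \<phi> z | z. z \<in> N}" unfolding Os_def orbits_def cK ..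
  have finOs: "finite Os" using finN Osdef by auto
  have sumO: "(\<Sum>orb\<in>Os. card orb) = card N"
    using group_action.disjoint_sum[OF act, of "\<lambda>_. (1::nat)"] finN cK Os_def by simp
  define Os1 where "Os1 = {orb \<in> Os. card orb = 1}"
  have O1O: "Os1 \<subseteq> Os" unfolding Os1_def by auto
  have "(\<Sum>orb\<in>Os. card orb) = (\<Sum>orb\<in>Os1. card orb) + (\<Sum>orb\<in>Os - Os1. card orb)"
    using sum.subset_diff[OF O1O finOs, of card] by simp
  moreover have "(\<Sum>orb\<in>Os1. card orb) = card Os1" unfolding Os1_def by simp
  moreover have "p dvd (\<Sum>orb\<in>Os - Os1. card orb)"
  proof (rule dvd_sum)
    fix orb assume "orb \<in> Os - Os1"
    then obtain z where z: "z \<in> N" and oz: "orb = orbit K \<phi> z" and c: "card orb \<noteq> 1"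
      unfolding Os1_def Osdef by auto
    obtain i where "i \<le> k" "card orb = p ^ i" using os[OF z] oz divides_primepow_nat[OF p] by blast
    then show "p dvd card orb" using c by (metis dvd_power neq0_conv power_0)
  qed
  moreover have "p dvd card N" using cN k1 by (simp add: dvd_power)
  ultimately have "p dvd card Os1 + (\<Sum>orb\<in>Os - Os1. card orb)" "p dvd (\<Sum>orb\<in>Os - Os1. card orb)"
    using sumO by metis+
  then have pO1: "p dvd card Os1" using dvd_add_left_iff by blast
  have oone: "orbit K \<phi> \<one> = {\<one>}"
    using central_iff[OF one_in] one_in NG orb[OF one_in] zin[OF one_in]
    by (metis card_1_singletonE l_one r_one singletonD)
  have O1one: "{\<one>} \<in> Os1" unfolding Os1_def Osdef using oone one_in by force
  have finO1: "finite Os1" using finOs O1O finite_subset by blast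
  have "card Os1 \<ge> 2"
  proof -
    have "card Os1 \<noteq> 0" using O1one finO1 by auto
    then have "card Os1 \<ge> p" using pO1 dvd_imp_le by blast
    then show ?thesis using prime_ge_2_nat[OF p] by linarith
  qed
  then have "card (Os1 - {{\<one>}}) \<ge> 1" using card_Diff_singleton[OF O1one] by simp
  then have "Os1 - {{\<one>}} \<noteq> {}" by (metis card.empty not_one_le_zero)
  then obtain orb where orb1: "orb \<in> Os1" and orbne: "orb \<noteq> {\<one>}" by blast
  then obtain z where z: "z \<in> N" and oz: "orb = orbit K \<phi> z" and c: "card orb = 1"
    unfolding Os1_def Osdef by auto
  have "z \<noteq> \<one>" using oz oone orbne by blast
  then show ?thesis using central_iff[OF z] c oz z by blast
qed

lemma (in group) cancel_l1: "x \<in> carrier G \<Longrightarrow> z \<in> carrier G \<Longrightarrow> x \<otimes> (inv x \<otimes> z) = z"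
  by (simp add: m_assoc[symmetric])
lemma (in group) cancel_l2: "x \<in> carrier G \<Longrightarrow> z \<in> carrier G \<Longrightarrow> inv x \<otimes> (x \<otimes> z) = z"
  by (simp add: m_assoc[symmetric])

lemma (in group) conj_finprod:
  assumes C: "comm_monoid C" and CA: "C = G\<lparr>carrier := A\<rparr>" and AG: "A \<subseteq> carrier G"
    and conjA: "\<And>c. c \<in> A \<Longrightarrow> inv h \<otimes> c \<otimes> h \<in> A"
    and h: "h \<in> carrier G" and S: "finite S"
  shows "f \<in> S \<rightarrow> A \<Longrightarrow> finprod C (\<lambda>g. inv h \<otimes> f g \<otimes> h) S = inv h \<otimes> finprod C f S \<otimes> h"
  using S
proof (induct S rule: finite_induct)
  case empty
  have o: "\<one>\<^bsub>C\<^esub> = \<one>" using CA by simp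
  have e1: "finprod C (\<lambda>g. inv h \<otimes> f g \<otimes> h) {} = \<one>" using comm_monoid.finprod_empty[OF C] o by metis
  have e2: "finprod C f {} = \<one>" using comm_monoid.finprod_empty[OF C] o by metis
  show ?case using e1 e2 h by simp
next
  case (insert b F)
  have cC: "carrier C = A" using CA by simp
  have mC: "\<And>u v. u \<otimes>\<^bsub>C\<^esub> v = u \<otimes> v" using CA by simp
  have fF: "f \<in> F \<rightarrow> carrier C" using insert.prems cC by auto
  have fb: "f b \<in> carrier C" using insert.prems cC by auto
  have gF: "(\<lambda>g. inv h \<otimes> f g \<otimes> h) \<in> F \<rightarrow> carrier C" using insert.prems cC conjA by auto
  have gb: "inv h \<otimes> f b \<otimes> h \<in> carrier C" using insert.prems cC conjA by auto
  have P: "finprod C f F \<in> A" using comm_monoid.finprod_closed[OF C fF] cC by simp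
  have fbG: "f b \<in> carrier G" using fb cC AG by auto
  have PG: "finprod C f F \<in> carrier G" using P AG by auto
  have "finprod C (\<lambda>g. inv h \<otimes> f g \<otimes> h) (insert b F)
        = (inv h \<otimes> f b \<otimes> h) \<otimes> finprod C (\<lambda>g. inv h \<otimes> f g \<otimes> h) F"
    using comm_monoid.finprod_insert[OF C insert.hyps(1,2) gF gb] mC by simp
  also have "\<dots> = (inv h \<otimes> f b \<otimes> h) \<otimes> (inv h \<otimes> finprod C f F \<otimes> h)"
    using insert.hyps(3) insert.prems by auto
  also have "\<dots> = inv h \<otimes> (f b \<otimes> finprod C f F) \<otimes> h"
    using h fbG PG by (simp add: m_assoc cancel_l1)
  also have "\<dots> = inv h \<otimes> finprod C f (insert b F) \<otimes> h"
    using comm_monoid.finprod_insert[OF C insert.hyps(1,2) fF fb] mC by simp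
  finally show ?case .
qed

lemma (in group) avg_lemma:
  fixes p :: nat and A N :: "'a set"
  assumes fin: "finite (carrier G)"
    and N: "subgroup N G" and cN: "card N = p ^ k" and p: "Factorial_Ring.prime p"
    and AN: "A \<subseteq> N" and Anorm: "A \<lhd> G" and Acomm: "\<forall>b\<in>A. \<forall>c\<in>A. b \<otimes> c = c \<otimes> b"
    and x: "x \<in> carrier G" and y: "y \<in> carrier G"
    and Cx: "\<forall>f\<in>A. f \<otimes> x = x \<otimes> f \<longrightarrow> f = \<one>"
    and a: "a \<in> A"
    and nQ: "\<not> p dvd card (generate G {x, y})"
    and nH: "\<not> p dvd card (generate G {x, y \<otimes> a})"
  shows "a = \<one>"
proof -
  define Q where "Q = generate G {x, y}"
  define H where "H = generate G {x, y \<otimes> a}"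
  have As: "subgroup A G" using normal_imp_subgroup[OF Anorm] .
  have AG: "A \<subseteq> carrier G" using subgroup.subset[OF As] .
  have aG: "a \<in> carrier G" using a AG by auto
  have one_A: "\<one> \<in> A" using subgroup.one_closed[OF As] .
  have yaG: "y \<otimes> a \<in> carrier G" using y aG by simp
  have HS: "subgroup H G" unfolding H_def using x yaG by (intro generate_is_subgroup) auto
  have QS: "subgroup Q G" unfolding Q_def using x y by (intro generate_is_subgroup) auto
  have QG: "Q \<subseteq> carrier G" using subgroup.subset[OF QS] .
  have HG: "H \<subseteq> carrier G" using subgroup.subset[OF HS] .
  have HN: "H \<inter> N = {\<one>}" using pgroup_inter_trivial[OF fin N cN p HS] nH H_def by simp
  have HA: "\<And>c. c \<in> H \<Longrightarrow> c \<in> A \<Longrightarrow> c = \<one>" using HN AN by blast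
  have inH: "\<And>u v. u \<in> H \<Longrightarrow> v \<in> H \<Longrightarrow> u \<otimes> v \<in> H" using subgroup.m_closed[OF HS] .
  have conj1: "\<And>g c. g \<in> carrier G \<Longrightarrow> c \<in> A \<Longrightarrow> inv g \<otimes> c \<otimes> g \<in> A"
    using normal.inv_op_closed1[OF Anorm] by blast
  have conj2: "\<And>g c. g \<in> carrier G \<Longrightarrow> c \<in> A \<Longrightarrow> g \<otimes> c \<otimes> inv g \<in> A"
    using normal.inv_op_closed2[OF Anorm] by blast
  have ex: "\<exists>c\<in>A. g \<otimes> c \<in> H" if g: "g \<in> Q" for g
    using g unfolding Q_def
  proof (induct rule: generate.induct)
    case one
    have "\<one> \<otimes> \<one> \<in> H" unfolding H_def using generate.one by simp
    then show ?case using one_A by blast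
  next
    case (incl h)
    then have "h = x \<or> h = y" by auto
    then show ?case
    proof
      assume "h = x"
      then have "h \<otimes> \<one> \<in> H" unfolding H_def using x generate.incl[of x "{x, y \<otimes> a}" G] by simp
      then show ?case using one_A by blast
    next
      assume "h = y"
      then have "h \<otimes> a \<in> H" unfolding H_def using generate.incl[of "y \<otimes> a" "{x, y \<otimes> a}" G] by simp
      then show ?case using a by blast
    qed
  next
    case (inv h)
    then have "h = x \<or> h = y" by auto
    then show ?case
    proof
      assume "h = x"
      then have "inv h \<otimes> \<one> \<in> H" unfolding H_def using x generate.inv[of x "{x, y \<otimes> a}" G] by simp
      then show ?case using one_A by blast
    next
      assume hy: "h = y"
      have ia: "inv a \<in> A" using subgroup.m_inv_closed[OF As a] .
      have c: "y \<otimes> inv a \<otimes> inv y \<in> A" using conj2[OF y ia] .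
      have "inv y \<otimes> (y \<otimes> inv a \<otimes> inv y) = inv (y \<otimes> a)"
        using y aG by (simp add: m_assoc cancel_l2 inv_mult_group)
      moreover have "inv (y \<otimes> a) \<in> H" unfolding H_def using generate.inv[of "y \<otimes> a" "{x, y \<otimes> a}" G] by simp
      ultimately show ?case using c hy by (metis)
    qed
  next
    case (eng g1 g2)
    have g1: "g1 \<in> carrier G" using eng.hyps(1) x y by (intro generate_in_carrier[of "{x, y}"]) auto
    have g2: "g2 \<in> carrier G" using eng.hyps(3) x y by (intro generate_in_carrier[of "{x, y}"]) auto
    obtain c1 where c1: "c1 \<in> A" "g1 \<otimes> c1 \<in> H" using eng.hyps(2) by blast
    obtain c2 where c2: "c2 \<in> A" "g2 \<otimes> c2 \<in> H" using eng.hyps(4) by blast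
    have c1G: "c1 \<in> carrier G" and c2G: "c2 \<in> carrier G" using c1 c2 AG by auto
    have cA: "inv g2 \<otimes> c1 \<otimes> g2 \<otimes> c2 \<in> A"
      using conj1[OF g2 c1(1)] c2(1) subgroup.m_closed[OF As] by blast
    have "g1 \<otimes> g2 \<otimes> (inv g2 \<otimes> c1 \<otimes> g2 \<otimes> c2) = (g1 \<otimes> c1) \<otimes> (g2 \<otimes> c2)"
      using g1 g2 c1G c2G by (simp add: m_assoc cancel_l1)
    then have "g1 \<otimes> g2 \<otimes> (inv g2 \<otimes> c1 \<otimes> g2 \<otimes> c2) \<in> H" using inH c1(2) c2(2) by simp
    then show ?case using cA by blast
  qed
  have uniq: "c = c'" if g: "g \<in> carrier G" and c: "c \<in> A" "c' \<in> A" and h: "g \<otimes> c \<in> H" "g \<otimes> c' \<in> H"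
    for g c c'
  proof -
    have cG: "c \<in> carrier G" "c' \<in> carrier G" using c AG by auto
    have "inv (g \<otimes> c) \<otimes> (g \<otimes> c') \<in> H"
      using h subgroup.m_inv_closed[OF HS] inH by blast
    moreover have "inv (g \<otimes> c) \<otimes> (g \<otimes> c') = inv c \<otimes> c'"
      using g cG by (simp add: inv_mult_group m_assoc cancel_l2)
    moreover have "inv c \<otimes> c' \<in> A" using c subgroup.m_inv_closed[OF As] subgroup.m_closed[OF As] by blast
    ultimately have "inv c \<otimes> c' = \<one>" using HA by simp
    then have "c \<otimes> (inv c \<otimes> c') = c" using cG by simp
    then show ?thesis using cG by (simp add: cancel_l1)
  qed
  define D where "D = (\<lambda>g. THE c. c \<in> A \<and> g \<otimes> c \<in> H)"
  have D_prop: "D g \<in> A \<and> g \<otimes> D g \<in> H" if g: "g \<in> Q" for g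
  proof -
    have "\<exists>!c. c \<in> A \<and> g \<otimes> c \<in> H" using ex[OF g] uniq g QG by blast
    then show ?thesis unfolding D_def by (rule theI')
  qed
  have D_eq: "D g = c" if g: "g \<in> Q" and c: "c \<in> A" "g \<otimes> c \<in> H" for g c
    using uniq[of g "D g" c] D_prop[OF g] g QG c by blast
  have xQ: "x \<in> Q" and yQ: "y \<in> Q" unfolding Q_def by (auto intro: generate.incl)
  have Dx: "D x = \<one>"
  proof (rule D_eq[OF xQ one_A])
    show "x \<otimes> \<one> \<in> H" unfolding H_def using x generate.incl[of x "{x, y \<otimes> a}" G] by simp
  qed
  have Dy: "D y = a"
  proof (rule D_eq[OF yQ a])
    show "y \<otimes> a \<in> H" unfolding H_def using generate.incl[of "y \<otimes> a" "{x, y \<otimes> a}" G] by simp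
  qed
  have cocy: "D (g \<otimes> h) = inv h \<otimes> D g \<otimes> h \<otimes> D h" if g: "g \<in> Q" and h: "h \<in> Q" for g h
  proof -
    have gG: "g \<in> carrier G" and hG: "h \<in> carrier G" using g h QG by auto
    have dg: "D g \<in> A" "g \<otimes> D g \<in> H" using D_prop[OF g] by auto
    have dh: "D h \<in> A" "h \<otimes> D h \<in> H" using D_prop[OF h] by auto
    have dG: "D g \<in> carrier G" "D h \<in> carrier G" using dg dh AG by auto
    have cA: "inv h \<otimes> D g \<otimes> h \<otimes> D h \<in> A"
      using conj1[OF hG dg(1)] dh(1) subgroup.m_closed[OF As] by blast
    have "g \<otimes> h \<otimes> (inv h \<otimes> D g \<otimes> h \<otimes> D h) = (g \<otimes> D g) \<otimes> (h \<otimes> D h)"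
      using gG hG dG by (simp add: m_assoc cancel_l1)
    then have "g \<otimes> h \<otimes> (inv h \<otimes> D g \<otimes> h \<otimes> D h) \<in> H" using inH dg(2) dh(2) by simp
    then show ?thesis using D_eq cA g h subgroup.m_closed[OF QS] by blast
  qed
  define C where "C = G\<lparr>carrier := A\<rparr>"
  have cC: "carrier C = A" and mC: "\<And>u v. u \<otimes>\<^bsub>C\<^esub> v = u \<otimes> v" by (simp_all add: C_def)
  have CG: "comm_group C"
  proof -
    have "group C" unfolding C_def using subgroup_imp_group[OF As] .
    then show ?thesis using Acomm cC mC by (intro group.group_comm_groupI) auto
  qed
  then have CM: "comm_monoid C" using comm_group_def by blast
  have finQ: "finite Q" using fin QG finite_subset by blast
  have DQ: "D \<in> Q \<rightarrow> carrier C" using D_prop cC by auto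
  define e where "e = finprod C D Q"
  have eA: "e \<in> A" unfolding e_def using comm_monoid.finprod_closed[OF CM DQ] cC by simp
  have key: "e = inv h \<otimes> e \<otimes> h \<otimes> D h [^] card Q" if h: "h \<in> Q" for h
  proof -
    have hG: "h \<in> carrier G" using h QG by auto
    have img: "(\<lambda>g. g \<otimes> h) ` Q = Q"
    proof
      show "(\<lambda>g. g \<otimes> h) ` Q \<subseteq> Q" using h subgroup.m_closed[OF QS] by auto
      show "Q \<subseteq> (\<lambda>g. g \<otimes> h) ` Q"
      proof
        fix g assume g: "g \<in> Q"
        have "g \<otimes> inv h \<in> Q" using g h subgroup.m_closed[OF QS] subgroup.m_inv_closed[OF QS] by blast
        moreover have "g = g \<otimes> inv h \<otimes> h"
        proof -
          have "g \<in> carrier G" using g QG by auto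
          then show ?thesis using hG by (simp add: m_assoc)
        qed
        ultimately show "g \<in> (\<lambda>g. g \<otimes> h) ` Q" by blast
      qed
    qed
    have inj: "inj_on (\<lambda>g. g \<otimes> h) Q"
    proof (rule inj_onI)
      fix u v assume uv: "u \<in> Q" "v \<in> Q" and e: "u \<otimes> h = v \<otimes> h"
      have "u \<in> carrier G" "v \<in> carrier G" using uv QG by auto
      then show "u = v" using hG e by simp
    qed
    have DhA: "D h \<in> A" using D_prop[OF h] by blast
    have DhG: "D h \<in> carrier G" using DhA AG by auto
    have f1: "(\<lambda>g. inv h \<otimes> D g \<otimes> h) \<in> Q \<rightarrow> carrier C" using D_prop conj1[OF hG] cC by auto
    have f2: "(\<lambda>g. D h) \<in> Q \<rightarrow> carrier C" using DhA cC by auto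
    have "e = finprod C D ((\<lambda>g. g \<otimes> h) ` Q)" unfolding e_def img ..
    also have "\<dots> = finprod C (\<lambda>g. D (g \<otimes> h)) Q"
      using comm_monoid.finprod_reindex[OF CM _ inj] DQ img by simp
    also have "\<dots> = finprod C (\<lambda>g. (inv h \<otimes> D g \<otimes> h) \<otimes>\<^bsub>C\<^esub> D h) Q"
    proof (rule comm_monoid.finprod_cong'[OF CM refl])
      show "(\<lambda>g. (inv h \<otimes> D g \<otimes> h) \<otimes>\<^bsub>C\<^esub> D h) \<in> Q \<rightarrow> carrier C"
      proof
        fix g assume "g \<in> Q"
        then have "inv h \<otimes> D g \<otimes> h \<in> A" using D_prop conj1[OF hG] by blast
        then show "(inv h \<otimes> D g \<otimes> h) \<otimes>\<^bsub>C\<^esub> D h \<in> carrier C"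
          using DhA subgroup.m_closed[OF As] cC mC by simp
      qed
      show "\<And>i. i \<in> Q \<Longrightarrow> D (i \<otimes> h) = inv h \<otimes> D i \<otimes> h \<otimes>\<^bsub>C\<^esub> D h"
        using cocy h mC by simp
    qed
    also have "\<dots> = finprod C (\<lambda>g. inv h \<otimes> D g \<otimes> h) Q \<otimes>\<^bsub>C\<^esub> finprod C (\<lambda>g. D h) Q"
      using comm_monoid.finprod_multf[OF CM f1 f2] .
    also have "finprod C (\<lambda>g. D h) Q = D h [^] card Q"
      using comm_monoid.finprod_const[OF CM, of "D h" Q] DhA cC nat_pow_consistent[of "D h" "card Q" A] C_def by simp
    also have "finprod C (\<lambda>g. inv h \<otimes> D g \<otimes> h) Q = inv h \<otimes> e \<otimes> h"
      unfolding e_def using conj_finprod[OF CM C_def AG conj1[OF hG] hG finQ, of D] D_prop by auto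
    finally show ?thesis using mC by simp
  qed
  have qx: "\<one> [^] card Q = \<one>" by simp
  have eG: "e \<in> carrier G" using eA AG by auto
  have "e = inv x \<otimes> e \<otimes> x" using key[OF xQ] Dx eG x by simp
  then have "x \<otimes> e = x \<otimes> (inv x \<otimes> e \<otimes> x)" by (rule arg_cong)
  also have "\<dots> = e \<otimes> x" using x eG by (simp add: m_assoc cancel_l1)
  finally have "x \<otimes> e = e \<otimes> x" .
  then have e1: "e = \<one>" using Cx eA by auto
  have "\<one> = a [^] card Q" using key[OF yQ] Dy e1 y aG by simp
  then have o1: "ord a dvd card Q" using pow_eq_id[OF aG, of "card Q"] by simp
  have "a [^] card N = \<one>"
  proof -
    have gN: "group (G\<lparr>carrier := N\<rparr>)" using subgroup_imp_group[OF N] .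
    have aN: "a \<in> N" using a AN by auto
    have "a [^]\<^bsub>G\<lparr>carrier := N\<rparr>\<^esub> order (G\<lparr>carrier := N\<rparr>) = \<one>\<^bsub>G\<lparr>carrier := N\<rparr>\<^esub>"
      using group.pow_order_eq_1[OF gN] aN by simp
    then show ?thesis using nat_pow_consistent[of a "card N" N] by (simp add: order_def)
  qed
  then have o2: "ord a dvd p ^ k" using pow_eq_id[OF aG] cN by simp
  have cop: "coprime (card Q) (p ^ k)"
  proof -
    have "coprime p (card Q)" using prime_imp_coprime[OF p] nQ Q_def by blast
    then show ?thesis by (simp add: coprime_commute)
  qed
  have "ord a dvd 1" using o1 o2 cop by (metis coprime_common_divisor)
  then have "ord a = 1" by simp
  then show ?thesis using ord_eq_1[OF aG] by simp
qed

lemma (in group) comm_inv: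
  assumes "c \<in> carrier G" "n \<in> carrier G" "c \<otimes> n = n \<otimes> c"
  shows "inv c \<otimes> n = n \<otimes> inv c"
proof -
  have "inv c \<otimes> (c \<otimes> n) \<otimes> inv c = inv c \<otimes> (n \<otimes> c) \<otimes> inv c" using assms(3) by simp
  then show ?thesis using assms(1,2) by (simp add: m_assoc cancel_l2)
qed

lemma (in group) center_normal:
  assumes Nn: "N \<lhd> G"
  shows "{c \<in> N. \<forall>n\<in>N. c \<otimes> n = n \<otimes> c} \<lhd> G"
proof -
  let ?A = "{c \<in> N. \<forall>n\<in>N. c \<otimes> n = n \<otimes> c}"
  have N: "subgroup N G" using normal_imp_subgroup[OF Nn] .
  have NG: "\<And>u. u \<in> N \<Longrightarrow> u \<in> carrier G" using subgroup.mem_carrier[OF N] .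
  have sub: "subgroup ?A G"
  proof (rule subgroupI)
    show "?A \<subseteq> carrier G" using NG by auto
    show "?A \<noteq> {}" using subgroup.one_closed[OF N] NG by auto
  next
    fix c assume c: "c \<in> ?A"
    have cN: "c \<in> N" using c by blast
    have "inv c \<otimes> n = n \<otimes> inv c" if n: "n \<in> N" for n
    proof -
      have "c \<otimes> n = n \<otimes> c" using c n by blast
      then show ?thesis using comm_inv[of c n] NG cN n by blast
    qed
    then show "inv c \<in> ?A" using subgroup.m_inv_closed[OF N cN] by blast
  next
    fix b c assume b: "b \<in> ?A" and c: "c \<in> ?A"
    have "b \<otimes> c \<otimes> n = n \<otimes> (b \<otimes> c)" if n: "n \<in> N" for n
    proof -
      have bG: "b \<in> carrier G" and cG: "c \<in> carrier G" and nG: "n \<in> carrier G" using b c n NG by auto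
      have cn: "c \<otimes> n = n \<otimes> c" using c n by blast
      have bn: "b \<otimes> n = n \<otimes> b" using b n by blast
      have "b \<otimes> c \<otimes> n = b \<otimes> (c \<otimes> n)" using bG cG nG by (simp add: m_assoc)
      also have "\<dots> = b \<otimes> (n \<otimes> c)" using cn by simp
      also have "\<dots> = (b \<otimes> n) \<otimes> c" using bG cG nG by (simp add: m_assoc)
      also have "\<dots> = (n \<otimes> b) \<otimes> c" using bn by simp
      also have "\<dots> = n \<otimes> (b \<otimes> c)" using bG cG nG by (simp add: m_assoc)
      finally show ?thesis .
    qed
    moreover have "b \<otimes> c \<in> N" using b c subgroup.m_closed[OF N] by blast
    ultimately show "b \<otimes> c \<in> ?A" by blast
  qed
  have conj: "g \<otimes> c \<otimes> inv g \<in> ?A" if g: "g \<in> carrier G" and c: "c \<in> ?A" for g c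
  proof -
    have cG: "c \<in> carrier G" using c NG by auto
    have inN: "g \<otimes> c \<otimes> inv g \<in> N" using normal.inv_op_closed2[OF Nn g] c by auto
    have "g \<otimes> c \<otimes> inv g \<otimes> n = n \<otimes> (g \<otimes> c \<otimes> inv g)" if n: "n \<in> N" for n
    proof -
      define m where "m = inv g \<otimes> n \<otimes> g"
      have mN: "m \<in> N" unfolding m_def using normal.inv_op_closed1[OF Nn g n] .
      have nG: "n \<in> carrier G" using n NG by auto
      have mG: "m \<in> carrier G" using mN NG by auto
      have nm: "n = g \<otimes> m \<otimes> inv g" unfolding m_def using g nG by (simp add: m_assoc cancel_l1)
      have cm: "c \<otimes> m = m \<otimes> c" using c mN by blast
      have "g \<otimes> c \<otimes> inv g \<otimes> n = g \<otimes> (c \<otimes> m) \<otimes> inv g"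
        unfolding nm using g cG mG by (simp add: m_assoc cancel_l2)
      also have "\<dots> = g \<otimes> (m \<otimes> c) \<otimes> inv g" using cm by simp
      also have "\<dots> = n \<otimes> (g \<otimes> c \<otimes> inv g)"
        unfolding nm using g cG mG by (simp add: m_assoc cancel_l2)
      finally show ?thesis .
    qed
    then show ?thesis using inN by blast
  qed
  show ?thesis using normal_inv_iff sub conj by blast
qed

theorem lemma2p4:
  fixes G (structure) and N :: "'a set" and p :: nat and x y :: 'a
  assumes "group G" and "finite (carrier G)"
    and "N \<lhd> G" and "N \<noteq> {\<one>}"
    and "Factorial_Ring.prime p" and "\<exists>k. card N = p ^ k"
    and "x \<in> carrier G" and "y \<in> carrier G"
    and "centralizer_in G N x = {\<one>}"
  shows "\<exists>n \<in> N. p dvd card (generate G {x, y \<otimes> n})"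
proof -
  interpret group G by (rule assms(1))
  have N: "subgroup N G" using normal_imp_subgroup[OF assms(3)] .
  obtain k where cN: "card N = p ^ k" using assms(6) by blast
  define A where "A = {c \<in> N. \<forall>n\<in>N. c \<otimes> n = n \<otimes> c}"
  have An: "A \<lhd> G" unfolding A_def using center_normal[OF assms(3)] .
  have AN: "A \<subseteq> N" unfolding A_def by auto
  have Acomm: "\<forall>b\<in>A. \<forall>c\<in>A. b \<otimes> c = c \<otimes> b" unfolding A_def by blast
  have Cx: "\<forall>f\<in>A. f \<otimes> x = x \<otimes> f \<longrightarrow> f = \<one>"
    using assms(9) AN unfolding centralizer_in_def by blast
  obtain z where z: "z \<in> N" "z \<noteq> \<one>" "\<forall>n\<in>N. z \<otimes> n = n \<otimes> z"
    using center_nontrivial[OF assms(2) N cN assms(5) assms(4)] by blast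
  have zA: "z \<in> A" unfolding A_def using z by blast
  show ?thesis
  proof (cases "p dvd card (generate G {x, y})")
    case True
    then show ?thesis using subgroup.one_closed[OF N] assms(8) by (intro bexI[of _ \<one>]) auto
  next
    case False
    show ?thesis
    proof (rule ccontr)
      assume "\<not> ?thesis"
      then have "\<not> p dvd card (generate G {x, y \<otimes> z})" using z(1) by blast
      then have "z = \<one>"
        using avg_lemma[OF assms(2) N cN assms(5) AN An Acomm assms(7) assms(8) Cx zA False] by blast
      then show False using z(2) by simp
    qed
  qed
qed

end
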